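(* Let $n\ge 2$ and let $G_n=H_0H_1\cdots H_{n-1}$ be a spiro hexagonal chain of length $n$ with cut-vertices $c_1,\dots,c_{n-1}$, and let $G_{n-1}=H_0H_1\cdots H_{n-2}$. Then $$W(G_n)=W(G_{n-1})+5\,W(G_{n-1},c_{n-1})+45n-18,$$ and for every vertex $c_n$ of $H_{n-1}$ other than $c_{n-1}$, $$W(G_n,c_n)=W(G_{n-1},c_{n-1})+f(c_n),$$ where $f(c_n)=5(n-1)+9$ if $c_n$ is an ortho-vertex of $H_{n-1}$, $f(c_n)=10(n-1)+9$ if $c_n$ is a meta-vertex of $H_{n-1}$, and $f(c_n)=15(n-1)+9$ if $c_n$ is the para-vertex of $H_{n-1}$. Moreover $W(G_1)=27$ and $W(G_1,c_1)=f(c_1)=9$ for any vertex $c_1$ of $H_0$.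
   Context: All graphs are simple and connected; $d(u,v)$ is the shortest-path distance. For a vertex $v$ of $G$, $W(G,v)=\sum_{u\in V(G)}d_G(u,v)$, and the Wiener index is $W(G)=\sum_{\{u,v\}\subseteq V(G)}d_G(u,v)$. A spiro hexagonal chain of length $n$, $G_n=H_0H_1\cdots H_{n-1}$, is a connected graph in which every block is a hexagon (6-cycle) $H_0,\dots,H_{n-1}$, each hexagon has at most two cut-vertices, each cut-vertex is shared by exactly two hexagons, and for $k=1,\dots,n-1$ the hexagons $H_{k-1}$ and $H_k$ share the cut-vertex $c_k$ (so $c_{k+1}\ne c_k$ are distinct vertices of $H_k$). For $k\ge1$, a vertex of $H_k$ at distance $1$, $2$, $3$ from $c_k$ is called an ortho-, meta-, para-vertex of $H_k$, denoted $o_k,m_k,p_k$ respectively (there are two ortho-, two meta- and one para-vertex). $G_1$ is a single hexagon $H_0$. *)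

theory Defs
  imports Main
begin

text \<open>A graph is given by a finite vertex set V and a symmetric irreflexive
adjacency relation E (with E only relating vertices of V).\<close>

definition is_walk :: "('a \<Rightarrow> 'a \<Rightarrow> bool) \<Rightarrow> 'a \<Rightarrow> 'a \<Rightarrow> 'a list \<Rightarrow> bool" where
  "is_walk E u v p \<longleftrightarrow> p \<noteq> [] \<and> hd p = u \<and> last p = v \<and>
     (\<forall>i. Suc i < length p \<longrightarrow> E (p ! i) (p ! Suc i))"

definition gdist :: "('a \<Rightarrow> 'a \<Rightarrow> bool) \<Rightarrow> 'a \<Rightarrow> 'a \<Rightarrow> nat" where
  "gdist E u v = (LEAST l. \<exists>p. is_walk E u v p \<and> length p = Suc l)"

definition Wv :: "'a set \<Rightarrow> ('a \<Rightarrow> 'a \<Rightarrow> bool) \<Rightarrow> 'a \<Rightarrow> nat" where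
  "Wv V E v = (\<Sum>u\<in>V. gdist E u v)"

text \<open>Wiener index: sum over unordered pairs = half the sum over ordered pairs.\<close>
definition Wiener :: "'a set \<Rightarrow> ('a \<Rightarrow> 'a \<Rightarrow> bool) \<Rightarrow> nat" where
  "Wiener V E = (\<Sum>u\<in>V. \<Sum>v\<in>V. gdist E u v) div 2"

text \<open>A chain is given by hv :: nat => nat => 'a, where hv k 0, ..., hv k 5 are the
vertices of hexagon H_k in cyclic order.\<close>

definition hex :: "(nat \<Rightarrow> nat \<Rightarrow> 'a) \<Rightarrow> nat \<Rightarrow> 'a set" where
  "hex hv k = hv k ` {..<6}"

definition chain_verts :: "(nat \<Rightarrow> nat \<Rightarrow> 'a) \<Rightarrow> nat \<Rightarrow> 'a set" where
  "chain_verts hv m = (\<Union>k<m. hex hv k)"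

definition chain_adj :: "(nat \<Rightarrow> nat \<Rightarrow> 'a) \<Rightarrow> nat \<Rightarrow> 'a \<Rightarrow> 'a \<Rightarrow> bool" where
  "chain_adj hv m x y \<longleftrightarrow> (\<exists>k<m. \<exists>i<6.
     (x = hv k i \<and> y = hv k (Suc i mod 6)) \<or> (y = hv k i \<and> x = hv k (Suc i mod 6)))"

definition cutv :: "(nat \<Rightarrow> nat \<Rightarrow> 'a) \<Rightarrow> nat \<Rightarrow> 'a" where
  "cutv hv k = (THE x. x \<in> hex hv (k - 1) \<inter> hex hv k)"

text \<open>Spiro hexagonal chain of length n: each H_k is a 6-cycle, consecutive hexagons
share exactly one vertex (the cut-vertex c_k), non-consecutive hexagons are disjoint
(so each cut-vertex lies in exactly two hexagons and every block is a hexagon),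
and c_{k+1} differs from c_k.\<close>
definition spiro_chain :: "(nat \<Rightarrow> nat \<Rightarrow> 'a) \<Rightarrow> nat \<Rightarrow> bool" where
  "spiro_chain hv n \<longleftrightarrow> n \<ge> 1 \<and>
     (\<forall>k<n. inj_on (hv k) {..<6}) \<and>
     (\<forall>k. 1 \<le> k \<and> k < n \<longrightarrow> card (hex hv (k - 1) \<inter> hex hv k) = 1) \<and>
     (\<forall>j k. Suc j < k \<and> k < n \<longrightarrow> hex hv j \<inter> hex hv k = {}) \<and>
     (\<forall>k. 1 \<le> k \<and> Suc k < n \<longrightarrow> cutv hv (Suc k) \<noteq> cutv hv k)"

end

theory Submission
  imports Defs
begin


definition symE :: "('a \<Rightarrow> 'a \<Rightarrow> bool) \<Rightarrow> bool" where
  "symE E \<longleftrightarrow> (\<forall>x y. E x y \<longrightarrow> E y x)"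

lemma walk_single[simp]: "is_walk E u v [x] \<longleftrightarrow> x = u \<and> x = v"
  unfolding is_walk_def by auto

lemma walk_Cons2: "is_walk E u v (x # y # r) \<longleftrightarrow> x = u \<and> E x y \<and> is_walk E y v (y # r)"
proof
  assume H: "is_walk E u v (x # y # r)"
  have "\<forall>i. Suc i < length (y # r) \<longrightarrow> E ((y # r) ! i) ((y # r) ! Suc i)"
  proof (intro allI impI)
    fix i assume "Suc i < length (y # r)"
    then have "Suc (Suc i) < length (x # y # r)" by simp
    with H show "E ((y # r) ! i) ((y # r) ! Suc i)" unfolding is_walk_def by fastforce
  qed
  moreover have "E x y" using H unfolding is_walk_def by fastforce
  ultimately show "x = u \<and> E x y \<and> is_walk E y v (y # r)" using H unfolding is_walk_def by auto
next
  assume H: "x = u \<and> E x y \<and> is_walk E y v (y # r)"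
  show "is_walk E u v (x # y # r)" unfolding is_walk_def
  proof (intro conjI allI impI)
    fix i assume i: "Suc i < length (x # y # r)"
    show "E ((x # y # r) ! i) ((x # y # r) ! Suc i)"
    proof (cases i)
      case 0 then show ?thesis using H by auto
    next
      case (Suc j) then show ?thesis using H i unfolding is_walk_def by auto
    qed
  qed (use H in \<open>auto simp: is_walk_def\<close>)
qed

lemma walk_ne: "is_walk E u v p \<Longrightarrow> p \<noteq> []" by (simp add: is_walk_def)

lemma walk_hd: "is_walk E u v (x # r) \<Longrightarrow> x = u" by (simp add: is_walk_def)

lemma walk_append:
  "is_walk E u v p \<Longrightarrow> is_walk E v w q \<Longrightarrow> is_walk E u w (p @ tl q)"
proof (induction p arbitrary: u)
  case Nil then show ?case by (simp add: is_walk_def)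
next
  case (Cons x r)
  show ?case
  proof (cases r)
    case Nil
    then have "x = u" "x = v" using Cons.prems by auto
    moreover obtain y q' where "q = y # q'" using Cons.prems(2) by (cases q) (auto dest: walk_ne)
    ultimately show ?thesis using Cons.prems(2) Nil walk_hd by fastforce
  next
    case (Cons y r')
    have "x = u" "E x y" "is_walk E y v (y # r')" using Cons.prems(1) \<open>r = y # r'\<close> walk_Cons2 by metis+
    then have "is_walk E y w ((y # r') @ tl q)" using Cons.IH Cons.prems(2) \<open>r = y # r'\<close> by simp
    then show ?thesis using \<open>x = u\<close> \<open>E x y\<close> \<open>r = y # r'\<close> by (simp add: walk_Cons2)
  qed
qed

lemma walk_edge: "E x y \<Longrightarrow> is_walk E x y [x, y]"
  by (simp add: walk_Cons2)

lemma walk_rev: "symE E \<Longrightarrow> is_walk E u v p \<Longrightarrow> is_walk E v u (rev p)"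
proof (induction p arbitrary: u)
  case Nil then show ?case by (simp add: is_walk_def)
next
  case (Cons x r)
  show ?case
  proof (cases r)
    case Nil then show ?thesis using Cons.prems by auto
  next
    case (Cons y r')
    have "x = u" "E x y" "is_walk E y v (y # r')" using Cons.prems(2) \<open>r = y # r'\<close> walk_Cons2 by metis+
    then have "is_walk E v y (rev r)" using Cons.IH Cons.prems(1) \<open>r = y # r'\<close> by simp
    moreover have "is_walk E y u [y, x]" using \<open>E x y\<close> Cons.prems(1) \<open>x = u\<close> unfolding symE_def
      by (simp add: walk_Cons2)
    ultimately have "is_walk E v u (rev r @ tl [y, x])" by (rule walk_append)
    then show ?thesis by simp
  qed
qed

lemma walk_mono: "is_walk E u v p \<Longrightarrow> (\<And>x y. E x y \<Longrightarrow> E' x y) \<Longrightarrow> is_walk E' u v p"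
  unfolding is_walk_def by auto

lemma gdist_le: "is_walk E u v p \<Longrightarrow> gdist E u v + 1 \<le> length p"
proof -
  assume H: "is_walk E u v p"
  then have "p \<noteq> []" by (rule walk_ne)
  then have "length p = Suc (length p - 1)" by simp
  with H have "gdist E u v \<le> length p - 1" unfolding gdist_def by (metis (mono_tags, lifting) Least_le)
  then show ?thesis using \<open>p \<noteq> []\<close> by (cases p) auto
qed

lemma gdist_walk: "is_walk E u v p \<Longrightarrow> \<exists>q. is_walk E u v q \<and> length q = Suc (gdist E u v)"
proof -
  assume H: "is_walk E u v p"
  then have "p \<noteq> []" by (rule walk_ne)
  then have "\<exists>l. \<exists>p. is_walk E u v p \<and> length p = Suc l" using H by (intro exI[of _ "length p - 1"]) auto
  then show ?thesis unfolding gdist_def by (rule LeastI_ex)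
qed

lemma gdist_self[simp]: "gdist E u u = 0"
proof -
  have "gdist E u u + 1 \<le> 1" using gdist_le[of E u u "[u]"] by simp
  then show ?thesis by simp
qed

lemma gdist_sym_le: "symE E \<Longrightarrow> is_walk E u v p \<Longrightarrow> gdist E v u \<le> gdist E u v"
proof -
  assume s: "symE E" and H: "is_walk E u v p"
  obtain q where q: "is_walk E u v q" "length q = Suc (gdist E u v)" using gdist_walk[OF H] by blast
  have "is_walk E v u (rev q)" using walk_rev[OF s q(1)] .
  from gdist_le[OF this] q(2) show ?thesis by simp
qed

lemma gdist_sym: "symE E \<Longrightarrow> is_walk E u v p \<Longrightarrow> gdist E v u = gdist E u v"
  by (meson antisym gdist_sym_le walk_rev)

lemma gdist_step: "is_walk E u a p \<Longrightarrow> E a b \<Longrightarrow> gdist E u b \<le> gdist E u a + 1"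
proof -
  assume H: "is_walk E u a p" and e: "E a b"
  obtain q where q: "is_walk E u a q" "length q = Suc (gdist E u a)" using gdist_walk[OF H] by blast
  have "is_walk E u b (q @ tl [a, b])" using walk_append[OF q(1) walk_edge[of E a b, OF e]] .
  from gdist_le[OF this] q(2) show ?thesis by simp
qed

lemma potential:
  assumes "\<And>x y. E x y \<Longrightarrow> \<phi> y \<le> \<phi> x + 1"
  shows "is_walk E u v p \<Longrightarrow> (\<phi> v :: nat) \<le> \<phi> u + (length p - 1)"
proof (induction p arbitrary: u)
  case Nil then show ?case by (simp add: is_walk_def)
next
  case (Cons x r)
  show ?case
  proof (cases r)
    case Nil then show ?thesis using Cons.prems by auto
  next
    case (Cons y r')
    have "x = u" "E x y" "is_walk E y v (y # r')" using Cons.prems \<open>r = y # r'\<close> walk_Cons2 by metis+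
    then have "\<phi> v \<le> \<phi> y + (length r - 1)" using Cons.IH \<open>r = y # r'\<close> by simp
    moreover have "\<phi> y \<le> \<phi> u + 1" using assms \<open>E x y\<close> \<open>x = u\<close> by blast
    ultimately show ?thesis using \<open>r = y # r'\<close> by simp
  qed
qed



definition conn :: "('a \<Rightarrow> 'a \<Rightarrow> bool) \<Rightarrow> 'a set \<Rightarrow> bool" where
  "conn E A \<longleftrightarrow> (\<forall>x\<in>A. \<forall>y\<in>A. \<exists>p. is_walk E x y p)"

lemma glue:
  assumes E: "\<And>x y. E x y \<longleftrightarrow> E1 x y \<or> E2 x y"
  and E1A: "\<And>x y. E1 x y \<Longrightarrow> x \<in> A \<and> y \<in> A"
  and E2B: "\<And>x y. E2 x y \<Longrightarrow> x \<in> B \<and> y \<in> B"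
  and AB: "A \<inter> B = {c}"
  and c1: "conn E1 A" and c2: "conn E2 B"
  and u: "u \<in> A" and x: "x \<in> A \<union> B"
  shows "gdist E u x = (if x \<in> A then gdist E1 u x else gdist E1 u c + gdist E2 c x)"
proof -
  define \<phi> where "\<phi> = (\<lambda>z. if z \<in> A then gdist E1 u z else gdist E1 u c + gdist E2 c z)"
  have cA: "c \<in> A" and cB: "c \<in> B" using AB by auto
  have phiB: "\<phi> z = gdist E1 u c + gdist E2 c z" if "z \<in> B" for z
  proof (cases "z \<in> A")
    case True then have "z = c" using AB that by auto
    then show ?thesis using True by (simp add: \<phi>_def)
  qed (simp add: \<phi>_def)
  have lip: "\<phi> b \<le> \<phi> a + 1" if "E a b" for a b
  proof -
    have "E1 a b \<or> E2 a b" using E that by blast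
    then show ?thesis
    proof
      assume e: "E1 a b"
      then have ab: "a \<in> A" "b \<in> A" using E1A[OF e] by auto
      obtain p where "is_walk E1 u a p" using c1 u ab unfolding conn_def by blast
      from gdist_step[OF this e] show ?thesis using ab by (simp add: \<phi>_def)
    next
      assume e: "E2 a b"
      then have ab: "a \<in> B" "b \<in> B" using E2B[OF e] by auto
      obtain p where "is_walk E2 c a p" using c2 cB ab unfolding conn_def by blast
      from gdist_step[OF this e] show ?thesis using ab phiB by simp
    qed
  qed
  have m1: "is_walk E a b p" if "is_walk E1 a b p" for a b p by (rule walk_mono[OF that]) (simp add: E)
  have m2: "is_walk E a b p" if "is_walk E2 a b p" for a b p by (rule walk_mono[OF that]) (simp add: E)
  obtain p where p: "is_walk E u x p" "length p = Suc (\<phi> x)"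
  proof (cases "x \<in> A")
    case True
    obtain p0 where w0: "is_walk E1 u x p0" using c1 u True unfolding conn_def by blast
    obtain p where "is_walk E1 u x p" "length p = Suc (gdist E1 u x)" using gdist_walk[OF w0] by blast
    then show ?thesis using that[of p] m1[of u x p] True by (simp add: \<phi>_def)
  next
    case False
    then have xB: "x \<in> B" using x by auto
    obtain p0 where w0: "is_walk E1 u c p0" using c1 u cA unfolding conn_def by blast
    obtain p where p: "is_walk E1 u c p" "length p = Suc (gdist E1 u c)" using gdist_walk[OF w0] by blast
    obtain q0 where w1: "is_walk E2 c x q0" using c2 xB cB unfolding conn_def by blast
    obtain q where q: "is_walk E2 c x q" "length q = Suc (gdist E2 c x)" using gdist_walk[OF w1] by blast
    have "is_walk E u x (p @ tl q)" using walk_append[OF m1[OF p(1)] m2[OF q(1)]] .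
    moreover have "length (p @ tl q) = Suc (\<phi> x)" using p(2) q(2) False by (simp add: \<phi>_def)
    ultimately show ?thesis by (rule that)
  qed
  have "gdist E u x + 1 \<le> length p" by (rule gdist_le[OF p(1)])
  moreover obtain q where q: "is_walk E u x q" "length q = Suc (gdist E u x)" using gdist_walk[OF p(1)] by blast
  have "\<phi> x \<le> \<phi> u + (length q - 1)" by (rule potential[OF lip q(1)])
  moreover have "\<phi> u = 0" using u by (simp add: \<phi>_def)
  ultimately have "gdist E u x = \<phi> x" using p(2) q(2) by simp
  then show ?thesis by (simp add: \<phi>_def)
qed

lemma glue_conn:
  assumes E: "\<And>x y. E1 x y \<Longrightarrow> E x y" "\<And>x y. E2 x y \<Longrightarrow> E x y"
  and AB: "c \<in> A" "c \<in> B"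
  and c1: "conn E1 A" and c2: "conn E2 B" and s: "symE E"
  shows "conn E (A \<union> B)"
proof -
  have w: "\<exists>p. is_walk E c z p" if "z \<in> A \<union> B" for z
  proof -
    { assume "z \<in> A"
      then obtain p where "is_walk E1 c z p" using c1 AB unfolding conn_def by blast
      then have ?thesis using walk_mono[of E1 c z p E] E(1) by blast }
    moreover
    { assume "z \<in> B"
      then obtain p where "is_walk E2 c z p" using c2 AB unfolding conn_def by blast
      then have ?thesis using walk_mono[of E2 c z p E] E(2) by blast }
    ultimately show ?thesis using that by blast
  qed
  show ?thesis unfolding conn_def
  proof (intro ballI)
    fix a b assume "a \<in> A \<union> B" "b \<in> A \<union> B"
    then obtain p q where "is_walk E c a p" "is_walk E c b q" using w by blast
    then show "\<exists>p. is_walk E a b p" using walk_append[OF walk_rev[OF s]] by blast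
  qed
qed



definition Ehex :: "(nat \<Rightarrow> nat \<Rightarrow> 'a) \<Rightarrow> nat \<Rightarrow> 'a \<Rightarrow> 'a \<Rightarrow> bool" where
  "Ehex hv k x y \<longleftrightarrow> (\<exists>i<6. (x = hv k i \<and> y = hv k (Suc i mod 6)) \<or> (y = hv k i \<and> x = hv k (Suc i mod 6)))"

definition cd :: "nat \<Rightarrow> nat \<Rightarrow> nat" where
  "cd i j = (let d = (if i \<le> j then j - i else i - j) in min d (6 - d))"

lemma less6: "(i::nat) < 6 \<longleftrightarrow> i = 0 \<or> i = 1 \<or> i = 2 \<or> i = 3 \<or> i = 4 \<or> i = 5" by arith

lemma cd_reach: "i < 6 \<Longrightarrow> j < 6 \<Longrightarrow> (i + cd i j) mod 6 = j \<or> (j + cd i j) mod 6 = i"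
  unfolding less6 by (elim disjE) (simp_all add: cd_def)

lemma cd_lip: "i < 6 \<Longrightarrow> t < 6 \<Longrightarrow> cd i (Suc t mod 6) \<le> cd i t + 1 \<and> cd i t \<le> cd i (Suc t mod 6) + 1"
  unfolding less6 by (elim disjE) (simp_all add: cd_def)

lemma cd_sum: "j < 6 \<Longrightarrow> (\<Sum>i<6. cd i j) = 9"
  unfolding less6 by (elim disjE) (simp_all add: cd_def eval_nat_numeral)

lemma cd_sum2: "i < 6 \<Longrightarrow> (\<Sum>j<6. cd i j) = 9"
  unfolding less6 by (elim disjE) (simp_all add: cd_def eval_nat_numeral)

lemma cd_self[simp]: "cd i i = 0" by (simp add: cd_def)

lemma symE_Ehex: "symE (Ehex hv k)" unfolding symE_def Ehex_def by blast

lemma Ehex_in: "Ehex hv k x y \<Longrightarrow> x \<in> hex hv k \<and> y \<in> hex hv k"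
  unfolding Ehex_def hex_def by auto

lemma hex_walk: assumes "i < 6" shows "\<exists>p. is_walk (Ehex hv k) (hv k i) (hv k ((i + t) mod 6)) p \<and> length p = Suc t"
proof (induction t)
  case 0
  show ?case using assms by (intro exI[of _ "[hv k i]"]) simp
next
  case (Suc t)
  then obtain p where p: "is_walk (Ehex hv k) (hv k i) (hv k ((i + t) mod 6)) p" "length p = Suc t" by blast
  have e: "Ehex hv k (hv k ((i + t) mod 6)) (hv k ((i + Suc t) mod 6))"
    unfolding Ehex_def by (rule exI[of _ "(i + t) mod 6"]) (simp add: mod_Suc_eq)
  have "is_walk (Ehex hv k) (hv k i) (hv k ((i + Suc t) mod 6)) (p @ tl [hv k ((i + t) mod 6), hv k ((i + Suc t) mod 6)])"
    by (rule walk_append[OF p(1) walk_edge[of "Ehex hv k", OF e]])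
  then show ?case using p(2) by (intro exI) auto
qed

lemma hex_gdist:
  assumes inj: "inj_on (hv k) {..<6}" and i: "i < 6" and j: "j < 6"
  shows "gdist (Ehex hv k) (hv k i) (hv k j) = cd i j"
proof -
  obtain p where p: "is_walk (Ehex hv k) (hv k i) (hv k j) p" "length p = Suc (cd i j)"
  proof -
    consider "(i + cd i j) mod 6 = j" | "(j + cd i j) mod 6 = i" using cd_reach[OF i j] by blast
    then show ?thesis
    proof cases
      case 1
      then show ?thesis using hex_walk[OF i, of hv k "cd i j"] that by auto
    next
      case 2
      then obtain q where q: "is_walk (Ehex hv k) (hv k j) (hv k i) q" "length q = Suc (cd i j)"
        using hex_walk[OF j, of hv k "cd i j"] by auto
      show ?thesis using that[OF walk_rev[OF symE_Ehex q(1)]] q(2) by simp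
    qed
  qed
  define \<phi> where "\<phi> = (\<lambda>z. cd i (inv_into {..<6} (hv k) z))"
  have inv: "inv_into {..<6} (hv k) (hv k t) = t" if "t < 6" for t
    using inv_into_f_f[OF inj] that by simp
  have lip: "\<phi> b \<le> \<phi> a + 1" if e: "Ehex hv k a b" for a b
  proof -
    obtain t where t: "t < 6" "(a = hv k t \<and> b = hv k (Suc t mod 6)) \<or> (b = hv k t \<and> a = hv k (Suc t mod 6))"
      using e unfolding Ehex_def by blast
    have "Suc t mod 6 < 6" by simp
    then show ?thesis using t cd_lip[OF i t(1)] inv[OF t(1)] inv[of "Suc t mod 6"] unfolding \<phi>_def by auto
  qed
  obtain q where q: "is_walk (Ehex hv k) (hv k i) (hv k j) q" "length q = Suc (gdist (Ehex hv k) (hv k i) (hv k j))"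
    using gdist_walk[OF p(1)] by blast
  have "\<phi> (hv k j) \<le> \<phi> (hv k i) + (length q - 1)" by (rule potential[OF lip q(1)])
  then have "cd i j \<le> gdist (Ehex hv k) (hv k i) (hv k j)" using q(2) inv[OF i] inv[OF j] by (simp add: \<phi>_def)
  moreover have "gdist (Ehex hv k) (hv k i) (hv k j) + 1 \<le> length p" by (rule gdist_le[OF p(1)])
  ultimately show ?thesis using p(2) by simp
qed

lemma conn_hex: "conn (Ehex hv k) (hex hv k)"
  unfolding conn_def hex_def
proof (intro ballI)
  fix x y assume "x \<in> hv k ` {..<6}" "y \<in> hv k ` {..<6}"
  then obtain i j where ij: "i < 6" "j < 6" "x = hv k i" "y = hv k j" by auto
  have "(i + cd i j) mod 6 = j \<or> (j + cd i j) mod 6 = i" by (rule cd_reach[OF ij(1,2)])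
  then show "\<exists>p. is_walk (Ehex hv k) x y p"
  proof
    assume "(i + cd i j) mod 6 = j"
    then show ?thesis using hex_walk[OF ij(1), of hv k "cd i j"] ij by auto
  next
    assume "(j + cd i j) mod 6 = i"
    then obtain q where q: "is_walk (Ehex hv k) y x q" using hex_walk[OF ij(2), of hv k "cd i j"] ij by auto
    show ?thesis using walk_rev[OF symE_Ehex q] by blast
  qed
qed

lemma hex_sum1:
  assumes inj: "inj_on (hv k) {..<6}" and x: "x \<in> hex hv k"
  shows "(\<Sum>u\<in>hex hv k. gdist (Ehex hv k) u x) = 9"
proof -
  obtain j where j: "j < 6" "x = hv k j" using x unfolding hex_def by auto
  have "(\<Sum>u\<in>hex hv k. gdist (Ehex hv k) u x) = (\<Sum>i<6. gdist (Ehex hv k) (hv k i) (hv k j))"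
    unfolding hex_def j(2) by (rule sum.reindex[OF inj, unfolded comp_def])
  also have "\<dots> = (\<Sum>i<6. cd i j)" using hex_gdist[of hv k, OF inj _ j(1)] by simp
  finally show ?thesis using cd_sum[OF j(1)] by simp
qed

lemma hex_sum2:
  assumes inj: "inj_on (hv k) {..<6}" and x: "x \<in> hex hv k"
  shows "(\<Sum>u\<in>hex hv k. gdist (Ehex hv k) x u) = 9"
proof -
  obtain j where j: "j < 6" "x = hv k j" using x unfolding hex_def by auto
  have "(\<Sum>u\<in>hex hv k. gdist (Ehex hv k) x u) = (\<Sum>i<6. gdist (Ehex hv k) (hv k j) (hv k i))"
    unfolding hex_def j(2) by (rule sum.reindex[OF inj, unfolded comp_def])
  also have "\<dots> = (\<Sum>i<6. cd j i)" using hex_gdist[of hv k, OF inj j(1)] by simp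
  finally show ?thesis using cd_sum2[OF j(1)] by simp
qed



lemma adj_Suc: "chain_adj hv (Suc m) x y \<longleftrightarrow> chain_adj hv m x y \<or> Ehex hv m x y"
  unfolding chain_adj_def Ehex_def by (auto simp: less_Suc_eq)

lemma verts_Suc: "chain_verts hv (Suc m) = chain_verts hv m \<union> hex hv m"
  unfolding chain_verts_def by (auto simp: lessThan_Suc)

lemma adj_in: "chain_adj hv m x y \<Longrightarrow> x \<in> chain_verts hv m \<and> y \<in> chain_verts hv m"
  unfolding chain_adj_def chain_verts_def hex_def by fastforce

lemma symE_adj: "symE (chain_adj hv m)"
  unfolding symE_def chain_adj_def by blast

lemma adj_1: "chain_adj hv 1 = Ehex hv 0"
  unfolding chain_adj_def Ehex_def by (intro ext) auto

lemma verts_1: "chain_verts hv 1 = hex hv 0"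
  unfolding chain_verts_def by auto

lemma finite_hex[simp]: "finite (hex hv k)" unfolding hex_def by simp

lemma finite_verts[simp]: "finite (chain_verts hv m)" unfolding chain_verts_def by simp

lemma card_hex: "inj_on (hv k) {..<6} \<Longrightarrow> card (hex hv k) = 6"
  unfolding hex_def by (simp add: card_image)

lemma spiro_inj: "spiro_chain hv n \<Longrightarrow> k < n \<Longrightarrow> inj_on (hv k) {..<6}"
  unfolding spiro_chain_def by blast

lemma spiro_inter:
  assumes s: "spiro_chain hv n" and m: "1 \<le> m" "m < n"
  shows "chain_verts hv m \<inter> hex hv m = {cutv hv m}"
proof -
  have "card (hex hv (m - 1) \<inter> hex hv m) = 1" using s m unfolding spiro_chain_def by blast
  then obtain a where a: "hex hv (m - 1) \<inter> hex hv m = {a}" by (rule card_1_singletonE)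
  have ca: "cutv hv m = a" unfolding cutv_def a by simp
  have disj: "hex hv k \<inter> hex hv m = {}" if "Suc k < m" for k using s that m unfolding spiro_chain_def by blast
  have "chain_verts hv m \<inter> hex hv m = (\<Union>k<m. hex hv k \<inter> hex hv m)" unfolding chain_verts_def by blast
  also have "\<dots> = {a}"
  proof
    show "(\<Union>k<m. hex hv k \<inter> hex hv m) \<subseteq> {a}"
    proof
      fix z assume "z \<in> (\<Union>k<m. hex hv k \<inter> hex hv m)"
      then obtain k where k: "k < m" "z \<in> hex hv k \<inter> hex hv m" by blast
      show "z \<in> {a}"
      proof (cases "k = m - 1")
        case True then show ?thesis using k a by auto
      next
        case False then have "Suc k < m" using k by arith
        then show ?thesis using disj k by blast
      qed
    qed
    show "{a} \<subseteq> (\<Union>k<m. hex hv k \<inter> hex hv m)" using a m by (intro subsetI UN_I[of "m - 1"]) auto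
  qed
  finally show ?thesis using ca by simp
qed



definition Tsum :: "'a set \<Rightarrow> ('a \<Rightarrow> 'a \<Rightarrow> bool) \<Rightarrow> nat" where
  "Tsum V E = (\<Sum>u\<in>V. \<Sum>v\<in>V. gdist E u v)"

lemma step:
  assumes s: "spiro_chain hv n" and m: "1 \<le> m" "m < n"
  and cA: "conn (chain_adj hv m) (chain_verts hv m)"
  shows "conn (chain_adj hv (Suc m)) (chain_verts hv (Suc m))"
    and "card (chain_verts hv (Suc m)) = card (chain_verts hv m) + 5"
    and "\<And>x. x \<in> hex hv m \<Longrightarrow> gdist (chain_adj hv (Suc m)) (cutv hv m) x = gdist (Ehex hv m) (cutv hv m) x"
    and "\<And>x. x \<in> hex hv m \<Longrightarrow> Wv (chain_verts hv (Suc m)) (chain_adj hv (Suc m)) x + gdist (Ehex hv m) (cutv hv m) x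
           = Wv (chain_verts hv m) (chain_adj hv m) (cutv hv m) + card (chain_verts hv m) * gdist (Ehex hv m) (cutv hv m) x + 9"
    and "Tsum (chain_verts hv (Suc m)) (chain_adj hv (Suc m)) = Tsum (chain_verts hv m) (chain_adj hv m)
           + 10 * Wv (chain_verts hv m) (chain_adj hv m) (cutv hv m) + 18 * card (chain_verts hv m) + 36"
proof -
  define A where "A = chain_verts hv m"
  define B where "B = hex hv m"
  define c where "c = cutv hv m"
  define E1 where "E1 = chain_adj hv m"
  define E2 where "E2 = Ehex hv m"
  define E where "E = chain_adj hv (Suc m)"
  define N where "N = card A"
  define W where "W = Wv A E1 c"
  have AB: "A \<inter> B = {c}" unfolding A_def B_def c_def by (rule spiro_inter[OF s m])
  have cinA: "c \<in> A" and cinB: "c \<in> B" using AB by auto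
  have inj: "inj_on (hv m) {..<6}" using spiro_inj[OF s m(2)] .
  have Eiff: "\<And>x y. E x y \<longleftrightarrow> E1 x y \<or> E2 x y" unfolding E_def E1_def E2_def by (rule adj_Suc)
  have Eiff': "\<And>x y. E x y \<longleftrightarrow> E2 x y \<or> E1 x y" using Eiff by blast
  have E1A: "\<And>x y. E1 x y \<Longrightarrow> x \<in> A \<and> y \<in> A" unfolding E1_def A_def by (rule adj_in)
  have E2B: "\<And>x y. E2 x y \<Longrightarrow> x \<in> B \<and> y \<in> B" unfolding E2_def B_def by (rule Ehex_in)
  have c1: "conn E1 A" using cA unfolding E1_def A_def .
  have c2: "conn E2 B" unfolding E2_def B_def by (rule conn_hex)
  have BA: "B \<inter> A = {c}" using AB by blast
  have VS: "chain_verts hv (Suc m) = A \<union> B" unfolding A_def B_def by (rule verts_Suc)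
  have gA: "gdist E u x = (if x \<in> A then gdist E1 u x else gdist E1 u c + gdist E2 c x)"
    if "u \<in> A" "x \<in> A \<union> B" for u x
    by (rule glue[OF Eiff E1A E2B AB c1 c2 that])
  have gB: "gdist E u x = (if x \<in> B then gdist E2 u x else gdist E2 u c + gdist E1 c x)"
    if hu: "u \<in> B" and hx: "x \<in> A \<union> B" for u x
  proof -
    have "x \<in> B \<union> A" using hx by blast
    from glue[OF Eiff' E2B E1A BA c2 c1 hu this] show ?thesis .
  qed
  have AA': "gdist E u x = gdist E1 u x" if "u \<in> A" "x \<in> A" for u x using gA[of u x] that by simp
  have AB': "gdist E u x = gdist E1 u c + gdist E2 c x" if "u \<in> A" "x \<in> B" for u x
  proof (cases "x \<in> A")
    case True then have "x = c" using AB that by blast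
    then show ?thesis using gA[of u x] that by simp
  qed (use gA[of u x] that in simp)
  have BA': "gdist E u x = gdist E2 u c + gdist E1 c x" if "u \<in> B" "x \<in> A" for u x
  proof (cases "x \<in> B")
    case True then have "x = c" using AB that by blast
    then show ?thesis using gB[of u x] that by simp
  qed (use gB[of u x] that in simp)
  have BB': "gdist E u x = gdist E2 u x" if "u \<in> B" "x \<in> B" for u x using gB[of u x] that by simp
  have symE: "symE E" unfolding E_def by (rule symE_adj)
  show "conn (chain_adj hv (Suc m)) (chain_verts hv (Suc m))"
    unfolding VS E_def[symmetric] by (rule glue_conn[OF _ _ cinA cinB c1 c2 symE]) (simp_all add: Eiff)
  have finA: "finite A" unfolding A_def by simp
  have finB: "finite B" unfolding B_def by simp
  have cardB: "card B = 6" unfolding B_def by (rule card_hex[of hv m, OF inj])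
  have cardBc: "card (B - {c}) = 5" using cardB cinB finB by simp
  have U: "A \<union> B = A \<union> (B - {c})" using cinA by blast
  have D: "A \<inter> (B - {c}) = {}" using AB by blast
  have "card (chain_verts hv (Suc m)) = card A + 5"
    unfolding VS U using card_Un_disjoint[OF finA _ D] cardBc finB by simp
  then show "card (chain_verts hv (Suc m)) = card (chain_verts hv m) + 5" unfolding A_def .
  show "gdist (chain_adj hv (Suc m)) (cutv hv m) x = gdist (Ehex hv m) (cutv hv m) x" if "x \<in> hex hv m" for x
    using AB'[OF cinA, of x] that unfolding E_def E1_def E2_def B_def c_def by simp
  have s1: "(\<Sum>u\<in>B. gdist E2 u x) = 9" if "x \<in> B" for x
    unfolding E2_def B_def by (rule hex_sum1[of hv m, OF inj that[unfolded B_def]])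
  have s2: "(\<Sum>u\<in>B. gdist E2 x u) = 9" if "x \<in> B" for x
    unfolding E2_def B_def by (rule hex_sum2[of hv m, OF inj that[unfolded B_def]])
  have rem: "(\<Sum>u\<in>B. f u) = f c + (\<Sum>u\<in>B - {c}. f u)" for f :: "'a \<Rightarrow> nat"
    by (rule sum.remove[OF finB cinB])
  have splitS: "(\<Sum>u\<in>A \<union> B. f u) = (\<Sum>u\<in>A. f u) + (\<Sum>u\<in>B - {c}. f u)" for f :: "'a \<Rightarrow> nat"
    unfolding U by (rule sum.union_disjoint[OF finA _ D]) (simp add: finB)
  have WvS: "Wv (A \<union> B) E x + gdist E2 c x = W + N * gdist E2 c x + 9" if x: "x \<in> B" for x
  proof -
    have e1: "Wv (A \<union> B) E x = (\<Sum>u\<in>A. gdist E u x) + (\<Sum>u\<in>B - {c}. gdist E u x)"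
      unfolding Wv_def by (rule splitS)
    have "(\<Sum>u\<in>A. gdist E u x) = (\<Sum>u\<in>A. gdist E1 u c + gdist E2 c x)"
      by (rule sum.cong) (simp_all add: AB' x)
    then have e2: "(\<Sum>u\<in>A. gdist E u x) = W + N * gdist E2 c x"
      unfolding W_def N_def Wv_def by (simp add: sum.distrib)
    have e3: "(\<Sum>u\<in>B - {c}. gdist E u x) = (\<Sum>u\<in>B - {c}. gdist E2 u x)"
      by (rule sum.cong) (simp_all add: BB' x)
    show ?thesis using e1 e2 e3 s1[OF x] rem[of "\<lambda>u. gdist E2 u x"] by simp
  qed
  show "Wv (chain_verts hv (Suc m)) (chain_adj hv (Suc m)) x + gdist (Ehex hv m) (cutv hv m) x
           = Wv (chain_verts hv m) (chain_adj hv m) (cutv hv m) + card (chain_verts hv m) * gdist (Ehex hv m) (cutv hv m) x + 9"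
    if "x \<in> hex hv m" for x
    using WvS[of x] that unfolding VS W_def N_def E_def E1_def E2_def A_def B_def c_def by simp
  have symd1: "gdist E1 c v = gdist E1 v c" if v: "v \<in> A" for v
  proof -
    obtain p where p: "is_walk E1 v c p" using c1 v cinA unfolding conn_def by blast
    have sE1: "symE E1" unfolding E1_def by (rule symE_adj)
    show ?thesis by (rule gdist_sym[OF sE1 p])
  qed
  have rowA: "(\<Sum>v\<in>A \<union> B. gdist E u v) = (\<Sum>v\<in>A. gdist E1 u v) + 5 * gdist E1 u c + 9" if u: "u \<in> A" for u
  proof -
    have e1: "(\<Sum>v\<in>A \<union> B. gdist E u v) = (\<Sum>v\<in>A. gdist E u v) + (\<Sum>v\<in>B - {c}. gdist E u v)" by (rule splitS)
    have e2: "(\<Sum>v\<in>A. gdist E u v) = (\<Sum>v\<in>A. gdist E1 u v)" by (rule sum.cong) (simp_all add: AA' u)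
    have "(\<Sum>v\<in>B - {c}. gdist E u v) = (\<Sum>v\<in>B - {c}. gdist E1 u c + gdist E2 c v)" by (rule sum.cong) (simp_all add: AB' u)
    then have e3: "(\<Sum>v\<in>B - {c}. gdist E u v) = 5 * gdist E1 u c + (\<Sum>v\<in>B - {c}. gdist E2 c v)" using cardBc by (simp add: sum.distrib)
    show ?thesis using e1 e2 e3 s2[OF cinB] rem[of "\<lambda>v. gdist E2 c v"] by simp
  qed
  have rowB: "(\<Sum>v\<in>A \<union> B. gdist E u v) + gdist E2 u c = N * gdist E2 u c + W + 9" if u: "u \<in> B" for u
  proof -
    have e1: "(\<Sum>v\<in>A \<union> B. gdist E u v) = (\<Sum>v\<in>A. gdist E u v) + (\<Sum>v\<in>B - {c}. gdist E u v)" by (rule splitS)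
    have "(\<Sum>v\<in>A. gdist E u v) = (\<Sum>v\<in>A. gdist E2 u c + gdist E1 v c)" by (rule sum.cong) (simp_all add: BA' u symd1)
    then have e2: "(\<Sum>v\<in>A. gdist E u v) = N * gdist E2 u c + W" unfolding N_def W_def Wv_def by (simp add: sum.distrib)
    have e3: "(\<Sum>v\<in>B - {c}. gdist E u v) = (\<Sum>v\<in>B - {c}. gdist E2 u v)" by (rule sum.cong) (simp_all add: BB' u)
    show ?thesis using e1 e2 e3 s2[OF u] rem[of "\<lambda>v. gdist E2 u v"] by simp
  qed
  have "(\<Sum>u\<in>A. \<Sum>v\<in>A \<union> B. gdist E u v) = (\<Sum>u\<in>A. (\<Sum>v\<in>A. gdist E1 u v) + 5 * gdist E1 u c + 9)"
    by (rule sum.cong) (simp_all add: rowA)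
  then have TA: "(\<Sum>u\<in>A. \<Sum>v\<in>A \<union> B. gdist E u v) = Tsum A E1 + 5 * W + 9 * N"
    unfolding Tsum_def W_def N_def Wv_def by (simp add: sum.distrib sum_distrib_left)
  have "(\<Sum>u\<in>B - {c}. (\<Sum>v\<in>A \<union> B. gdist E u v) + gdist E2 u c) = (\<Sum>u\<in>B - {c}. N * gdist E2 u c + W + 9)"
    by (rule sum.cong) (simp_all add: rowB)
  then have TB0: "(\<Sum>u\<in>B - {c}. \<Sum>v\<in>A \<union> B. gdist E u v) + (\<Sum>u\<in>B - {c}. gdist E2 u c)
        = N * (\<Sum>u\<in>B - {c}. gdist E2 u c) + 5 * W + 45" using cardBc
    by (simp add: sum.distrib sum_distrib_left)
  have s9: "(\<Sum>u\<in>B - {c}. gdist E2 u c) = 9" using s1[OF cinB] rem[of "\<lambda>u. gdist E2 u c"] by simp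
  have TB: "(\<Sum>u\<in>B - {c}. \<Sum>v\<in>A \<union> B. gdist E u v) + 9 = 9 * N + 5 * W + 45"
    using TB0 unfolding s9 by simp
  have "Tsum (A \<union> B) E = (\<Sum>u\<in>A. \<Sum>v\<in>A \<union> B. gdist E u v) + (\<Sum>u\<in>B - {c}. \<Sum>v\<in>A \<union> B. gdist E u v)"
    unfolding Tsum_def by (rule splitS)
  then have "Tsum (A \<union> B) E = Tsum A E1 + 10 * W + 18 * N + 36"
    using TA TB by simp
  then show "Tsum (chain_verts hv (Suc m)) (chain_adj hv (Suc m)) = Tsum (chain_verts hv m) (chain_adj hv m)
           + 10 * Wv (chain_verts hv m) (chain_adj hv m) (cutv hv m) + 18 * card (chain_verts hv m) + 36"
    unfolding VS W_def N_def E_def E1_def A_def c_def .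
qed



lemma base_facts:
  assumes inj: "inj_on (hv 0) {..<6}"
  shows "conn (chain_adj hv 1) (chain_verts hv 1)"
    and "card (chain_verts hv 1) = 6"
    and "Tsum (chain_verts hv 1) (chain_adj hv 1) = 54"
    and "\<And>x. x \<in> hex hv 0 \<Longrightarrow> Wv (chain_verts hv 1) (chain_adj hv 1) x = 9"
proof -
  show "conn (chain_adj hv 1) (chain_verts hv 1)" unfolding adj_1 verts_1 by (rule conn_hex)
  show "card (chain_verts hv 1) = 6" unfolding verts_1 by (rule card_hex[of hv 0, OF inj])
  have "Tsum (hex hv 0) (Ehex hv 0) = (\<Sum>u\<in>hex hv 0. 9)" unfolding Tsum_def
    by (rule sum.cong) (simp_all add: hex_sum2[of hv 0, OF inj])
  then show "Tsum (chain_verts hv 1) (chain_adj hv 1) = 54" unfolding adj_1 verts_1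
    using card_hex[of hv 0, OF inj] by simp
  show "Wv (chain_verts hv 1) (chain_adj hv 1) x = 9" if "x \<in> hex hv 0" for x
    unfolding adj_1 verts_1 Wv_def by (rule hex_sum1[of hv 0, OF inj that])
qed

lemma chain_ind:
  assumes s: "spiro_chain hv n"
  shows "1 \<le> m \<Longrightarrow> m \<le> n \<Longrightarrow> conn (chain_adj hv m) (chain_verts hv m) \<and> card (chain_verts hv m) = 5 * m + 1
           \<and> even (Tsum (chain_verts hv m) (chain_adj hv m))"
proof (induction m)
  case 0 then show ?case by simp
next
  case (Suc m)
  have n1: "0 < n" using Suc.prems by simp
  have inj0: "inj_on (hv 0) {..<6}" by (rule spiro_inj[OF s n1])
  show ?case
  proof (cases "m = 0")
    case True
    then show ?thesis using base_facts[of hv, OF inj0] by simp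
  next
    case False
    then have m1: "1 \<le> m" and mn: "m < n" using Suc.prems by auto
    have IH: "conn (chain_adj hv m) (chain_verts hv m)" "card (chain_verts hv m) = 5 * m + 1"
      "even (Tsum (chain_verts hv m) (chain_adj hv m))" using Suc.IH m1 mn by auto
    note st = step[of hv n m, OF s m1 mn IH(1)]
    show ?thesis using st(1) st(2) st(5) IH(2) IH(3) by simp
  qed
qed



theorem theorem2p1:
  fixes hv :: "nat \<Rightarrow> nat \<Rightarrow> 'a" and n :: nat
  assumes "n \<ge> 2" and "spiro_chain hv n"
  shows "(Wiener (chain_verts hv n) (chain_adj hv n)
           = Wiener (chain_verts hv (n - 1)) (chain_adj hv (n - 1))
             + 5 * Wv (chain_verts hv (n - 1)) (chain_adj hv (n - 1)) (cutv hv (n - 1))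
             + 45 * n - 18) \<and>
         (\<forall>x \<in> hex hv (n - 1) - {cutv hv (n - 1)}.
           (gdist (chain_adj hv n) (cutv hv (n - 1)) x = 1 \<longrightarrow>
              Wv (chain_verts hv n) (chain_adj hv n) x
                = Wv (chain_verts hv (n - 1)) (chain_adj hv (n - 1)) (cutv hv (n - 1))
                  + (5 * (n - 1) + 9)) \<and>
           (gdist (chain_adj hv n) (cutv hv (n - 1)) x = 2 \<longrightarrow>
              Wv (chain_verts hv n) (chain_adj hv n) x
                = Wv (chain_verts hv (n - 1)) (chain_adj hv (n - 1)) (cutv hv (n - 1))
                  + (10 * (n - 1) + 9)) \<and>
           (gdist (chain_adj hv n) (cutv hv (n - 1)) x = 3 \<longrightarrow>
              Wv (chain_verts hv n) (chain_adj hv n) x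
                = Wv (chain_verts hv (n - 1)) (chain_adj hv (n - 1)) (cutv hv (n - 1))
                  + (15 * (n - 1) + 9))) \<and>
         Wiener (chain_verts hv 1) (chain_adj hv 1) = 27 \<and>
         (\<forall>x \<in> hex hv 0. Wv (chain_verts hv 1) (chain_adj hv 1) x = 9)"
proof -
  define m where "m = n - 1"
  have nm: "n = Suc m" and m1: "1 \<le> m" and mn: "m < n" using assms(1) unfolding m_def by auto
  have s: "spiro_chain hv n" by (rule assms(2))
  have inj0: "inj_on (hv 0) {..<6}" using spiro_inj[OF s] mn by simp
  note B = base_facts[of hv, OF inj0]
  have IH: "conn (chain_adj hv m) (chain_verts hv m)" "card (chain_verts hv m) = 5 * m + 1"
      "even (Tsum (chain_verts hv m) (chain_adj hv m))" using chain_ind[OF s m1] mn by auto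
  note st = step[of hv n m, OF s m1 mn IH(1)]
  define W where "W = Wv (chain_verts hv m) (chain_adj hv m) (cutv hv m)"
  define T where "T = Tsum (chain_verts hv m) (chain_adj hv m)"
  have Wi: "Wiener V E = Tsum V E div 2" for V :: "'a set" and E unfolding Wiener_def Tsum_def ..
  have c1: "Wiener (chain_verts hv n) (chain_adj hv n)
           = Wiener (chain_verts hv m) (chain_adj hv m) + 5 * W + 45 * n - 18"
  proof -
    have "Tsum (chain_verts hv n) (chain_adj hv n) = T + 10 * W + 18 * (5 * m + 1) + 36"
      using st(5) IH(2) unfolding nm W_def T_def by simp
    moreover have "even T" using IH(3) unfolding T_def .
    ultimately show ?thesis unfolding Wi T_def[symmetric] using nm by auto
  qed
  have c2: "Wv (chain_verts hv n) (chain_adj hv n) x = W + (5 * m * d + 9)"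
    if x: "x \<in> hex hv m" and d: "gdist (chain_adj hv n) (cutv hv m) x = d" for x d
  proof -
    have "gdist (Ehex hv m) (cutv hv m) x = d" using st(3)[OF x] d unfolding nm by simp
    then show ?thesis using st(4)[OF x] IH(2) unfolding nm W_def by (simp add: algebra_simps)
  qed
  show ?thesis
  proof (intro conjI ballI)
    show "Wiener (chain_verts hv n) (chain_adj hv n)
           = Wiener (chain_verts hv (n - 1)) (chain_adj hv (n - 1))
             + 5 * Wv (chain_verts hv (n - 1)) (chain_adj hv (n - 1)) (cutv hv (n - 1))
             + 45 * n - 18" using c1 unfolding W_def m_def .
    show "Wiener (chain_verts hv 1) (chain_adj hv 1) = 27" using B(3) unfolding Wi by simp
    show "Wv (chain_verts hv 1) (chain_adj hv 1) x = 9" if "x \<in> hex hv 0" for x using B(4)[OF that] .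
  next
    fix x assume "x \<in> hex hv (n - 1) - {cutv hv (n - 1)}"
    then have x: "x \<in> hex hv m" unfolding m_def by simp
    show "gdist (chain_adj hv n) (cutv hv (n - 1)) x = 1 \<longrightarrow>
              Wv (chain_verts hv n) (chain_adj hv n) x
                = Wv (chain_verts hv (n - 1)) (chain_adj hv (n - 1)) (cutv hv (n - 1))
                  + (5 * (n - 1) + 9)" using c2[OF x, of 1] unfolding W_def m_def by simp
    show "gdist (chain_adj hv n) (cutv hv (n - 1)) x = 2 \<longrightarrow>
              Wv (chain_verts hv n) (chain_adj hv n) x
                = Wv (chain_verts hv (n - 1)) (chain_adj hv (n - 1)) (cutv hv (n - 1))
                  + (10 * (n - 1) + 9)" using c2[OF x, of 2] unfolding W_def m_def by simp
    show "gdist (chain_adj hv n) (cutv hv (n - 1)) x = 3 \<longrightarrow>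
              Wv (chain_verts hv n) (chain_adj hv n) x
                = Wv (chain_verts hv (n - 1)) (chain_adj hv (n - 1)) (cutv hv (n - 1))
                  + (15 * (n - 1) + 9)" using c2[OF x, of 3] unfolding W_def m_def by simp
  qed
qed

end
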